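(* Let $n$ be odd, let $A$ be a finite set of alternatives, and let $P=(P_1,\ldots,P_n)$ be a profile of linear orders on $A$ held by voters $V=\{1,\ldots,n\}$. If $P$ is single-crossing with respect to a tree $T=(V,E)$ whose vertex set is the set of voters, then there exists $i\in\{1,\ldots,n\}$ such that the preference order $P_i$ coincides with the majority relation of $P$.
   Context: A profile is an $n$-tuple of (strict) linear orders on $A$; voter $i$ prefers $a$ to $b$, written $a\succ_i b$, if $aP_ib$. The majority relation of $P$: $a\succeq b$ iff $|\{i: a\succ_i b\}|\ge|\{i: b\succ_i a\}|$; for $n$ odd this is a complete asymmetric relation, with $a\succ b$ iff a strict majority of voters prefers $a$ to $b$. Given a tree $T=(V,E)$ on the voter set, $P$ is single-crossing with respect to $T$ if for every pair of distinct alternatives $a,b\in A$ one of the following holds: (i) there is an edge $e\in E$ (an "$ab$-cut") such that, removing $e$ from $T$, the two resulting subtrees have vertex sets $V_1,V_2$ with all voters in $V_1$ preferring $a$ to $b$ and all voters in $V_2$ preferring $b$ to $a$; or (ii) all voters prefer $a$ to $b$, or all voters prefer $b$ to $a$ (a "virtual" cut). *)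

theory Defs
  imports Main
begin

definition ugraph :: "'v set \<Rightarrow> 'v set set \<Rightarrow> bool" where
  "ugraph V E \<longleftrightarrow> (\<forall>e\<in>E. \<exists>u v. e = {u, v} \<and> u \<noteq> v \<and> u \<in> V \<and> v \<in> V)"

definition adj :: "'v set set \<Rightarrow> ('v \<times> 'v) set" where
  "adj E = {(u, v). {u, v} \<in> E}"

definition connected_graph :: "'v set \<Rightarrow> 'v set set \<Rightarrow> bool" where
  "connected_graph V E \<longleftrightarrow> (\<forall>u\<in>V. \<forall>v\<in>V. (u, v) \<in> (adj E)\<^sup>*)"

definition is_cycle :: "'v set set \<Rightarrow> 'v list \<Rightarrow> bool" where
  "is_cycle E cs \<longleftrightarrow> length cs \<ge> 3 \<and> distinct cs
     \<and> (\<forall>k. Suc k < length cs \<longrightarrow> {cs ! k, cs ! Suc k} \<in> E)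
     \<and> {last cs, hd cs} \<in> E"

definition is_tree :: "'v set \<Rightarrow> 'v set set \<Rightarrow> bool" where
  "is_tree V E \<longleftrightarrow> ugraph V E \<and> V \<noteq> {} \<and> connected_graph V E \<and> (\<nexists>cs. is_cycle E cs)"

definition linear_order_on_A :: "'a set \<Rightarrow> 'a rel \<Rightarrow> bool" where
  "linear_order_on_A A r \<longleftrightarrow> r \<subseteq> A \<times> A \<and> strict_linear_order_on A r"

definition maj_weak :: "nat set \<Rightarrow> (nat \<Rightarrow> 'a rel) \<Rightarrow> 'a \<Rightarrow> 'a \<Rightarrow> bool" where
  "maj_weak V P a b \<longleftrightarrow> card {i\<in>V. (a, b) \<in> P i} \<ge> card {i\<in>V. (b, a) \<in> P i}"

definition ab_cut :: "nat set \<Rightarrow> nat set set \<Rightarrow> (nat \<Rightarrow> 'a rel) \<Rightarrow> 'a \<Rightarrow> 'a \<Rightarrow> nat set \<Rightarrow> bool" where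
  "ab_cut V E P a b e \<longleftrightarrow> e \<in> E \<and> (\<exists>u v. e = {u, v} \<and>
     (\<forall>i\<in>V. (u, i) \<in> (adj (E - {e}))\<^sup>* \<longrightarrow> (a, b) \<in> P i) \<and>
     (\<forall>i\<in>V. (v, i) \<in> (adj (E - {e}))\<^sup>* \<longrightarrow> (b, a) \<in> P i))"

definition single_crossing :: "'a set \<Rightarrow> nat set \<Rightarrow> nat set set \<Rightarrow> (nat \<Rightarrow> 'a rel) \<Rightarrow> bool" where
  "single_crossing A V E P \<longleftrightarrow> (\<forall>a\<in>A. \<forall>b\<in>A. a \<noteq> b \<longrightarrow>
     (\<exists>e\<in>E. ab_cut V E P a b e) \<or> (\<forall>i\<in>V. (a, b) \<in> P i) \<or> (\<forall>i\<in>V. (b, a) \<in> P i))"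

end

theory Submission
  imports Defs
begin

lemma rtrancl_path:
  assumes "(x,y) \<in> r\<^sup>*"
  shows "\<exists>xs. xs \<noteq> [] \<and> hd xs = x \<and> last xs = y \<and> distinct xs \<and>
           (\<forall>k. Suc k < length xs \<longrightarrow> (xs!k, xs!Suc k) \<in> r)"
  using assms
proof (induction rule: rtrancl_induct)
  case base
  then show ?case by (intro exI[of _ "[x]"]) auto
next
  case (step y z)
  then obtain xs where xs: "xs \<noteq> []" "hd xs = x" "last xs = y" "distinct xs"
    "\<forall>k. Suc k < length xs \<longrightarrow> (xs!k, xs!Suc k) \<in> r" by blast
  show ?case
  proof (cases "z \<in> set xs")
    case True
    then obtain i where i: "i < length xs" "xs ! i = z" by (meson in_set_conv_nth)
    let ?ys = "take (Suc i) xs"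
    have "?ys \<noteq> []" using xs(1) by simp
    moreover have "hd ?ys = x" using xs(1,2) by (simp add: hd_take)
    moreover have "last ?ys = z" using i by (simp add: take_Suc_conv_app_nth)
    moreover have "distinct ?ys" using xs(4) by simp
    moreover have "\<forall>k. Suc k < length ?ys \<longrightarrow> (?ys!k, ?ys!Suc k) \<in> r"
      using xs(5) i by auto
    ultimately show ?thesis by blast
  next
    case False
    let ?ys = "xs @ [z]"
    have "\<forall>k. Suc k < length ?ys \<longrightarrow> (?ys!k, ?ys!Suc k) \<in> r"
    proof (intro allI impI)
      fix k assume k: "Suc k < length ?ys"
      show "(?ys!k, ?ys!Suc k) \<in> r"
      proof (cases "Suc k < length xs")
        case True then show ?thesis using xs(5) by (simp add: nth_append)
      next
        case False
        then have "k = length xs - 1" using k by simp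
        moreover have "xs ! (length xs - 1) = y" using xs(1,3) by (simp add: last_conv_nth)
        ultimately show ?thesis using step(2) xs(1) False k by (simp add: nth_append)
      qed
    qed
    then show ?thesis using xs False by (intro exI[of _ ?ys]) auto
  qed
qed

lemma adj_sym: "(x,y) \<in> adj F \<Longrightarrow> (y,x) \<in> adj F"
  unfolding adj_def by (auto simp: insert_commute)

lemma adj_rtrancl_sym: "(x,y) \<in> (adj F)\<^sup>* \<Longrightarrow> (y,x) \<in> (adj F)\<^sup>*"
proof (induction rule: rtrancl_induct)
  case base then show ?case by simp
next
  case (step y z) then show ?case
    by (meson adj_sym converse_rtrancl_into_rtrancl)
qed

lemma bridge:
  assumes tree: "is_tree V E" and e: "{u,v} \<in> E" and uv: "u \<noteq> v"
  shows "(u,v) \<notin> (adj (E - {{u,v}}))\<^sup>*"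
proof
  assume "(u,v) \<in> (adj (E - {{u,v}}))\<^sup>*"
  then obtain xs where xs: "xs \<noteq> []" "hd xs = u" "last xs = v" "distinct xs"
    "\<forall>k. Suc k < length xs \<longrightarrow> (xs!k, xs!Suc k) \<in> adj (E - {{u,v}})"
    using rtrancl_path by metis
  have l2: "length xs \<ge> 2"
  proof (rule ccontr)
    assume "\<not> length xs \<ge> 2"
    moreover have "length xs > 0" using xs(1) by simp
    ultimately have "length xs = 1" by linarith
    then have "hd xs = last xs" by (cases xs) auto
    then show False using xs uv by simp
  qed
  have l3: "length xs \<ge> 3"
  proof (rule ccontr)
    assume "\<not> length xs \<ge> 3"
    then have "length xs = 2" using l2 by simp
    then have "xs ! 0 = u" "xs ! 1 = v" using xs(1,2,3)
      by (auto simp: hd_conv_nth last_conv_nth)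
    then have "(u,v) \<in> adj (E - {{u,v}})" using xs(5) \<open>length xs = 2\<close>
      by (metis One_nat_def lessI numeral_2_eq_2)
    then show False unfolding adj_def by auto
  qed
  have "is_cycle E xs"
    unfolding is_cycle_def
  proof (intro conjI allI impI)
    show "3 \<le> length xs" by (rule l3)
    show "distinct xs" by (rule xs(4))
    fix k assume "Suc k < length xs"
    then have "(xs!k, xs!Suc k) \<in> adj (E - {{u,v}})" using xs(5) by blast
    then show "{xs ! k, xs ! Suc k} \<in> E" unfolding adj_def by auto
  next
    show "{last xs, hd xs} \<in> E" using xs(2,3) e by (simp add: insert_commute)
  qed
  then show False using tree unfolding is_tree_def by blast
qed

definition sd :: "nat set \<Rightarrow> nat set set \<Rightarrow> nat set \<Rightarrow> nat \<Rightarrow> nat set" where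
  "sd V E e p = {i\<in>V. (p,i) \<in> (adj (E - {e}))\<^sup>*}"

lemma cover_aux:
  assumes "(u,i) \<in> (adj E)\<^sup>*" "e = {u,v}"
  shows "(u,i) \<in> (adj (E - {e}))\<^sup>* \<or> (v,i) \<in> (adj (E - {e}))\<^sup>*"
  using assms(1)
proof (induction rule: rtrancl_induct)
  case base then show ?case by simp
next
  case (step j k)
  show ?case
  proof (cases "{j,k} = e")
    case True
    then have "k = u \<or> k = v" using assms(2) by (auto simp: doubleton_eq_iff)
    then show ?thesis by auto
  next
    case False
    then have "(j,k) \<in> adj (E - {e})" using step(2) unfolding adj_def by auto
    then show ?thesis using step(3) by (meson rtrancl_into_rtrancl)
  qed
qed

lemma avoid:
  assumes "(y,z) \<in> (adj (E - {e}))\<^sup>*"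
    and "\<And>w. (y,w) \<in> (adj (E - {e}))\<^sup>* \<Longrightarrow> w \<noteq> u \<and> w \<noteq> v"
  shows "(y,z) \<in> (adj (E - {{u,v}}))\<^sup>*"
  using assms(1)
proof (induction rule: rtrancl_induct)
  case base then show ?case by simp
next
  case (step j k)
  have rk: "(y,k) \<in> (adj (E - {e}))\<^sup>*" using step(1,2) by (rule rtrancl_into_rtrancl)
  have "j \<noteq> u" "j \<noteq> v" using assms(2)[OF step(1)] by auto
  moreover have "k \<noteq> u" "k \<noteq> v" using assms(2)[OF rk] by auto
  then have "{j,k} \<noteq> {u,v}" by (auto simp: doubleton_eq_iff)
  then have "(j,k) \<in> adj (E - {{u,v}})" using step(2) unfolding adj_def by auto
  then show ?case using step(3) by (meson rtrancl_into_rtrancl)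
qed

lemma partition:
  assumes tree: "is_tree V E" and e: "e \<in> E" "e = {p,q}" and pq: "p \<noteq> q" "p \<in> V" "q \<in> V"
  shows "sd V E e p \<union> sd V E e q = V" "sd V E e p \<inter> sd V E e q = {}"
proof -
  show "sd V E e p \<union> sd V E e q = V"
  proof
    show "sd V E e p \<union> sd V E e q \<subseteq> V" unfolding sd_def by auto
    show "V \<subseteq> sd V E e p \<union> sd V E e q"
    proof
      fix i assume "i \<in> V"
      then have "(p,i) \<in> (adj E)\<^sup>*" using tree pq unfolding is_tree_def connected_graph_def by blast
      then have "(p,i) \<in> (adj (E - {e}))\<^sup>* \<or> (q,i) \<in> (adj (E - {e}))\<^sup>*"
        by (rule cover_aux[OF _ e(2)])
      then show "i \<in> sd V E e p \<union> sd V E e q" using \<open>i \<in> V\<close>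
        unfolding sd_def by simp
    qed
  qed
  show "sd V E e p \<inter> sd V E e q = {}"
  proof (rule ccontr)
    assume "sd V E e p \<inter> sd V E e q \<noteq> {}"
    then obtain i where "(p,i) \<in> (adj (E - {e}))\<^sup>*" "(q,i) \<in> (adj (E - {e}))\<^sup>*"
      unfolding sd_def by blast
    then have "(p,q) \<in> (adj (E - {e}))\<^sup>*" by (meson adj_rtrancl_sym rtrancl_trans)
    moreover have "(p,q) \<notin> (adj (E - {{p,q}}))\<^sup>*" using bridge[OF tree _ pq(1)] e by simp
    ultimately show False using e(2) by simp
  qed
qed

lemma edge_facts:
  assumes tree: "is_tree V E" and e: "e \<in> E" "e = {p,q}"
  shows "p \<noteq> q" "p \<in> V" "q \<in> V"
proof -
  obtain u v where "e = {u,v}" "u \<noteq> v" "u \<in> V" "v \<in> V"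
    using tree e(1) unfolding is_tree_def ugraph_def by blast
  then show "p \<noteq> q" "p \<in> V" "q \<in> V" using e(2) by (auto simp: doubleton_eq_iff)
qed

lemma card_part:
  assumes "A \<union> B = V" "A \<inter> B = {}" "finite V"
  shows "card A + card B = card V"
  using assms by (metis card_Un_disjoint finite_Un)

lemma centroid:
  assumes tree: "is_tree V E" and V: "V = {1..n}" and odd: "odd n"
  shows "\<exists>c\<in>V. \<forall>e\<in>E. \<forall>p q. e = {p,q} \<longrightarrow> c \<in> sd V E e p \<longrightarrow> n < 2 * card (sd V E e p)"
proof (cases "E = {}")
  case True
  have "V \<noteq> {}" using tree unfolding is_tree_def by blast
  then have "1 \<in> V" "n \<in> V" using V by auto
  then have "(1,n) \<in> (adj E)\<^sup>*" using tree unfolding is_tree_def connected_graph_def by blast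
  moreover have "adj E = {}" using True unfolding adj_def by auto
  ultimately have "n = 1" by simp
  then show ?thesis using True V by auto
next
  case False
  have finV: "finite V" and cardV: "card V = n" using V by auto
  have finsd: "\<And>e p. finite (sd V E e p)" using finV unfolding sd_def by auto
  have cards: "card (sd V E e p) + card (sd V E e q) = n" if "e \<in> E" "e = {p,q}" for e p q
    using partition[OF tree that edge_facts[OF tree that]] card_part finV cardV by metis
  define Hv where "Hv = (\<lambda>(e,p). e \<in> E \<and> (\<exists>q. e = {p,q}) \<and> n < 2 * card (sd V E e p))"
  obtain e0 where "e0 \<in> E" using False by blast
  then obtain p0 q0 where pq0: "e0 = {p0,q0}" using tree unfolding is_tree_def ugraph_def by blast
  have "card (sd V E e0 p0) + card (sd V E e0 q0) = n" using cards \<open>e0 \<in> E\<close> pq0 by blast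
  then have "n < 2 * card (sd V E e0 p0) \<or> n < 2 * card (sd V E e0 q0)" using odd by presburger
  then have "\<exists>x. Hv x" unfolding Hv_def using \<open>e0 \<in> E\<close> pq0 by (auto simp: insert_commute)
  then obtain x where x: "Hv x" and xmin: "\<And>y. Hv y \<Longrightarrow> (\<lambda>(e,p). card (sd V E e p)) x \<le> (\<lambda>(e,p). card (sd V E e p)) y"
    using ex_has_least_nat[of Hv] by metis
  obtain f u where xfu: "x = (f,u)" by (cases x)
  obtain v where f: "f \<in> E" "f = {u,v}" and heavyu: "n < 2 * card (sd V E f u)"
    using x unfolding Hv_def xfu by auto
  have min: "card (sd V E f u) \<le> card (sd V E e p)" if "Hv (e,p)" for e p
    using xmin[OF that] xfu by simp
  note fv = edge_facts[OF tree f]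
  have cuv: "card (sd V E f u) + card (sd V E f v) = n" using cards f by blast
  note partf = partition[OF tree f fv]
  show ?thesis
  proof (intro bexI[of _ u] ballI allI impI)
    show "u \<in> V" by (rule fv(2))
    fix e p q assume e: "e \<in> E" and epq: "e = {p,q}" and up: "u \<in> sd V E e p"
    note pq = edge_facts[OF tree e epq]
    note parte = partition[OF tree e epq pq]
    have cpq: "card (sd V E e p) + card (sd V E e q) = n" using cards e epq by blast
    show "n < 2 * card (sd V E e p)"
    proof (rule ccontr)
      assume nh: "\<not> n < 2 * card (sd V E e p)"
      then have hq: "n < 2 * card (sd V E e q)" using cpq odd by presburger
      have Hq: "Hv (e,q)" unfolding Hv_def using e epq hq by (auto simp: insert_commute)
      have uq: "u \<notin> sd V E e q" using up parte(2) by blast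
      show False
      proof (cases "e = f")
        case True
        then have "(p = u \<and> q = v) \<or> (p = v \<and> q = u)" using epq f by (auto simp: doubleton_eq_iff)
        then show False
        proof
          assume "p = u \<and> q = v" then show False using nh heavyu True by simp
        next
          assume "p = v \<and> q = u"
          moreover have "u \<in> sd V E f u" using fv unfolding sd_def by simp
          ultimately show False using uq True by simp
        qed
      next
        case ne: False
        have "(u,v) \<in> adj (E - {e})" using f ne unfolding adj_def by auto
        moreover have "(p,u) \<in> (adj (E - {e}))\<^sup>*" using up unfolding sd_def by auto
        ultimately have "(p,v) \<in> (adj (E - {e}))\<^sup>*" by (meson rtrancl_into_rtrancl)
        then have vp: "v \<in> sd V E e p" using fv unfolding sd_def by auto
        have av: "(q,z) \<in> (adj (E - {f}))\<^sup>*" if "z \<in> sd V E e q" for z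
          unfolding f(2)
        proof (rule avoid)
          show "(q,z) \<in> (adj (E - {e}))\<^sup>*" using that unfolding sd_def by auto
          fix w assume "(q,w) \<in> (adj (E - {e}))\<^sup>*"
          then show "w \<noteq> u \<and> w \<noteq> v" using up vp parte(2) fv unfolding sd_def by auto
        qed
        have pqf: "(p,q) \<in> adj (E - {f})" using e epq ne unfolding adj_def by auto
        show False
        proof (cases "(u,p) \<in> (adj (E - {f}))\<^sup>*")
          case True
          have sub: "sd V E e q \<subseteq> sd V E f u"
          proof
            fix z assume z: "z \<in> sd V E e q"
            have "(u,q) \<in> (adj (E - {f}))\<^sup>*" using True pqf by (meson rtrancl_into_rtrancl)
            then have "(u,z) \<in> (adj (E - {f}))\<^sup>*" using av[OF z] by (meson rtrancl_trans)
            then show "z \<in> sd V E f u" using z unfolding sd_def by auto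
          qed
          moreover have "u \<in> sd V E f u" using fv unfolding sd_def by simp
          ultimately have "sd V E e q \<subset> sd V E f u" using uq by blast
          then have "card (sd V E e q) < card (sd V E f u)" using finsd by (meson psubset_card_mono)
          then show False using min[OF Hq] by simp
        next
          case False
          then have "p \<notin> sd V E f u" unfolding sd_def by auto
          then have "p \<in> sd V E f v" using partf(1) pq(2) by blast
          then have vp2: "(v,p) \<in> (adj (E - {f}))\<^sup>*" unfolding sd_def by auto
          have sub: "sd V E e q \<subseteq> sd V E f v"
          proof
            fix z assume z: "z \<in> sd V E e q"
            have "(v,q) \<in> (adj (E - {f}))\<^sup>*" using vp2 pqf by (meson rtrancl_into_rtrancl)
            then have "(v,z) \<in> (adj (E - {f}))\<^sup>*" using av[OF z] by (meson rtrancl_trans)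
            then show "z \<in> sd V E f v" using z unfolding sd_def by auto
          qed
          then have "card (sd V E e q) \<le> card (sd V E f v)" using finsd by (meson card_mono)
          then show False using hq heavyu cuv by linarith
        qed
      qed
    qed
  qed
qed

theorem theorem1:
  fixes n :: nat and A :: "'a set" and P :: "nat \<Rightarrow> 'a rel" and E :: "nat set set"
  assumes "odd n"
    and "finite A"
    and "\<forall>i\<in>{1..n}. linear_order_on_A A (P i)"
    and "is_tree {1..n} E"
    and "single_crossing A {1..n} E P"
  shows "\<exists>i\<in>{1..n}. \<forall>a\<in>A. \<forall>b\<in>A. a \<noteq> b \<longrightarrow> ((a, b) \<in> P i \<longleftrightarrow> maj_weak {1..n} P a b)"
proof -
  define V where "V = {1..n}"
  have tree: "is_tree V E" using assms(4) V_def by simp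
  obtain c where c: "c \<in> V" and cen: "\<forall>e\<in>E. \<forall>p q. e = {p,q} \<longrightarrow> c \<in> sd V E e p \<longrightarrow> n < 2 * card (sd V E e p)"
    using centroid[OF tree V_def assms(1)] by blast
  have finV: "finite V" and cardV: "card V = n" using V_def by auto
  have lin: "\<And>i. i \<in> V \<Longrightarrow> trans (P i) \<and> irrefl (P i) \<and> total_on A (P i)"
    using assms(3) unfolding V_def linear_order_on_A_def strict_linear_order_on_def by blast
  have asym: "\<And>i x y. i \<in> V \<Longrightarrow> (x,y) \<in> P i \<Longrightarrow> (y,x) \<notin> P i"
    using lin unfolding trans_def irrefl_def by blast
  show ?thesis unfolding V_def[symmetric]
  proof (intro bexI[OF _ c] ballI impI)
    fix a b assume a: "a \<in> A" and b: "b \<in> A" and ab: "a \<noteq> b"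
    define Ab where "Ab = {i\<in>V. (a,b) \<in> P i}"
    define Ba where "Ba = {i\<in>V. (b,a) \<in> P i}"
    have "Ab \<union> Ba = V" using lin a b ab unfolding Ab_def Ba_def total_on_def by blast
    moreover have "Ab \<inter> Ba = {}" using asym unfolding Ab_def Ba_def by blast
    ultimately have cs: "card Ab + card Ba = n" using card_part finV cardV by metis
    have finAB: "finite Ab" "finite Ba" using finV unfolding Ab_def Ba_def by auto
    have mw: "maj_weak V P a b \<longleftrightarrow> n < 2 * card Ab"
      unfolding maj_weak_def Ab_def[symmetric] Ba_def[symmetric] using cs assms(1) by presburger
    have goal: "(a,b) \<in> P c \<longleftrightarrow> n < 2 * card Ab"
    proof -
      have "(\<exists>e\<in>E. ab_cut V E P a b e) \<or> (\<forall>i\<in>V. (a, b) \<in> P i) \<or> (\<forall>i\<in>V. (b, a) \<in> P i)"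
        using assms(5) a b ab unfolding single_crossing_def V_def by blast
      then show ?thesis
      proof (elim disjE)
        assume "\<exists>e\<in>E. ab_cut V E P a b e"
        then obtain e u v where e: "e \<in> E" "e = {u,v}"
          and su: "sd V E e u \<subseteq> Ab" and sv: "sd V E e v \<subseteq> Ba"
          unfolding ab_cut_def sd_def Ab_def Ba_def by blast
        note uv = edge_facts[OF tree e]
        note pe = partition[OF tree e uv]
        have "c \<in> sd V E e u \<or> c \<in> sd V E e v" using pe(1) c by blast
        then show ?thesis
        proof
          assume cu: "c \<in> sd V E e u"
          then have "n < 2 * card (sd V E e u)" using cen e by blast
          moreover have "card (sd V E e u) \<le> card Ab" using su finAB by (meson card_mono)
          moreover have "(a,b) \<in> P c" using cu su unfolding Ab_def by blast
          ultimately show ?thesis by simp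
        next
          assume cv: "c \<in> sd V E e v"
          have "{v,u} = e" using e by (simp add: insert_commute)
          then have "n < 2 * card (sd V E e v)" using cen e(1) cv by blast
          moreover have "card (sd V E e v) \<le> card Ba" using sv finAB by (meson card_mono)
          moreover have "(a,b) \<notin> P c" using cv sv asym c unfolding Ba_def by blast
          ultimately show ?thesis using cs by simp
        qed
      next
        assume "\<forall>i\<in>V. (a, b) \<in> P i"
        then have "Ab = V" unfolding Ab_def by blast
        moreover have "n \<ge> 1" using c V_def by simp
        ultimately show ?thesis using c \<open>\<forall>i\<in>V. (a, b) \<in> P i\<close> cardV by simp
      next
        assume all: "\<forall>i\<in>V. (b, a) \<in> P i"
        then have "Ab = {}" using asym unfolding Ab_def by blast
        then show ?thesis using all asym c by simp
      qed
    qed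
    show "(a, b) \<in> P c \<longleftrightarrow> maj_weak V P a b" using goal mw by simp
  qed
qed

end
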